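(* Let $S\subset\mathbb Z_{\ge1}$. Then $\langle S\rangle_{\mathcal C^w}$ is the union of $S+(\mathcal S_\Gamma\cup\{0\})$ and the set of all integers of the form $k+\overline\beta_b-\overline\beta_a+s$ with $k\in S$, $s\in\mathcal S_\Gamma\cup\{0\}$, $1\le a<b\le g$, $k\le\overline\beta_a$ and $k\equiv\beta_a\pmod{e_{a-1}}$.
   Context: Let $\Gamma$ be a singular irreducible plane branch with multiplicity $n$, Puiseux characteristic exponents $\beta_1<\dots<\beta_g$, $e_0=n$, $e_j=\gcd(e_{j-1},\beta_j)$, $n_j=e_{j-1}/e_j$, $\overline\beta_1=\beta_1$, $\overline\beta_j=n_{j-1}\overline\beta_{j-1}-\beta_{j-1}+\beta_j$ ($2\le j\le g$), and semigroup $\mathcal S_\Gamma$ generated by $n,\overline\beta_1,\dots,\overline\beta_g$. A subset $S\subset\mathbb Z_{>0}$ is a $\mathcal C^w$-collection if $S+\mathcal S_\Gamma\subset S$ and for every $1\le l<g$ and $\lambda\in S$ with $\lambda\le\overline\beta_l$ and $\lambda\equiv\beta_l\pmod{e_{l-1}}$ one has $\lambda+\overline\beta_{l+1}-\overline\beta_l\in S$. $\langle S\rangle_{\mathcal C^w}$ is the smallest $\mathcal C^w$-collection containing $S$. *)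

theory Defs
  imports Main
begin

text \<open>Data of a plane branch: multiplicity n, genus g, characteristic exponents
  beta 1 < ... < beta g (values of beta outside 1..g are irrelevant).\<close>

fun ee :: "int \<Rightarrow> (nat \<Rightarrow> int) \<Rightarrow> nat \<Rightarrow> int" where
  "ee n \<beta> 0 = n"
| "ee n \<beta> (Suc j) = gcd (ee n \<beta> j) (\<beta> (Suc j))"

text \<open>betabar 0 is set to n by convention (unused); betabar 1 = beta 1,
  betabar (l+1) = n_l * betabar l - beta l + beta (l+1), with n_l = e_(l-1)/e_l.\<close>
fun betabar :: "int \<Rightarrow> (nat \<Rightarrow> int) \<Rightarrow> nat \<Rightarrow> int" where
  "betabar n \<beta> 0 = n"
| "betabar n \<beta> (Suc 0) = \<beta> 1"
| "betabar n \<beta> (Suc (Suc j)) =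
     (ee n \<beta> j div ee n \<beta> (Suc j)) * betabar n \<beta> (Suc j) - \<beta> (Suc j) + \<beta> (Suc (Suc j))"

definition puiseux_char :: "int \<Rightarrow> nat \<Rightarrow> (nat \<Rightarrow> int) \<Rightarrow> bool" where
  "puiseux_char n g \<beta> \<longleftrightarrow> n \<ge> 2 \<and> g \<ge> 1 \<and> n < \<beta> 1
     \<and> (\<forall>j\<in>{1..<g}. \<beta> j < \<beta> (Suc j))
     \<and> (\<forall>j\<in>{1..g}. ee n \<beta> j < ee n \<beta> (j - 1))
     \<and> ee n \<beta> g = 1"

text \<open>The semigroup generated by n, betabar 1, ..., betabar g (contains 0).\<close>
definition semigroup_branch :: "int \<Rightarrow> nat \<Rightarrow> (nat \<Rightarrow> int) \<Rightarrow> int set" where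
  "semigroup_branch n g \<beta> =
     {x. \<exists>c :: nat \<Rightarrow> nat. x = int (c 0) * n + (\<Sum>j=1..g. int (c j) * betabar n \<beta> j)}"

definition Cw_collection :: "int \<Rightarrow> nat \<Rightarrow> (nat \<Rightarrow> int) \<Rightarrow> int set \<Rightarrow> bool" where
  "Cw_collection n g \<beta> T \<longleftrightarrow> T \<subseteq> {0<..}
     \<and> (\<forall>x\<in>T. \<forall>s\<in>semigroup_branch n g \<beta>. x + s \<in> T)
     \<and> (\<forall>l\<in>{1..<g}. \<forall>x\<in>T. x \<le> betabar n \<beta> l \<and> x mod ee n \<beta> (l - 1) = \<beta> l mod ee n \<beta> (l - 1)
          \<longrightarrow> x + betabar n \<beta> (Suc l) - betabar n \<beta> l \<in> T)"

definition Cw_hull :: "int \<Rightarrow> nat \<Rightarrow> (nat \<Rightarrow> int) \<Rightarrow> int set \<Rightarrow> int set" where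
  "Cw_hull n g \<beta> S = \<Inter>{T. Cw_collection n g \<beta> T \<and> S \<subseteq> T}"

end

theory Submission
  imports Defs
begin


lemma ee_dvd_Suc: "ee n \<beta> (Suc j) dvd ee n \<beta> j" by simp

lemma ee_dvd_mono: "i \<le> j \<Longrightarrow> ee n \<beta> j dvd ee n \<beta> i"
proof (induction j)
  case 0 then show ?case by simp
next
  case (Suc j)
  show ?case
  proof (cases "i = Suc j")
    case False
    then have "i \<le> j" using Suc.prems by simp
    then show ?thesis using dvd_trans[OF ee_dvd_Suc Suc.IH[OF \<open>i \<le> j\<close>]] by simp
  qed simp
qed

lemma ee_dvd_beta: "j \<ge> 1 \<Longrightarrow> ee n \<beta> j dvd \<beta> j"
  by (cases j) auto

lemma bb_Suc: "l \<ge> 1 \<Longrightarrow> betabar n \<beta> (Suc l) =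
   (ee n \<beta> (l-1) div ee n \<beta> l) * betabar n \<beta> l - \<beta> l + \<beta> (Suc l)"
  by (cases l) auto

lemma ee_dvd_bb: "j \<ge> 1 \<Longrightarrow> ee n \<beta> j dvd betabar n \<beta> j"
proof (induction j rule: nat_induct_at_least)
  case base then show ?case by simp
next
  case (Suc l)
  have a: "ee n \<beta> (Suc l) dvd ee n \<beta> l" by simp
  have "ee n \<beta> (Suc l) dvd betabar n \<beta> l" using dvd_trans[OF a Suc.IH] .
  moreover have "ee n \<beta> (Suc l) dvd \<beta> l" using dvd_trans[OF a ee_dvd_beta[OF Suc.hyps]] .
  moreover have "ee n \<beta> (Suc l) dvd \<beta> (Suc l)" by (rule ee_dvd_beta) simp
  ultimately show ?case unfolding bb_Suc[OF Suc.hyps]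
    by (intro dvd_add dvd_diff dvd_mult) auto
qed

context
  fixes n :: int and g :: nat and \<beta> :: "nat \<Rightarrow> int"
  assumes P: "puiseux_char n g \<beta>"
begin

lemma ee_ge: "m \<le> g \<Longrightarrow> ee n \<beta> (g - m) \<ge> 1 + int m"
proof (induction m)
  case 0 then show ?case using P by (simp add: puiseux_char_def)
next
  case (Suc m)
  have "g - m \<in> {1..g}" using Suc.prems by auto
  moreover have "\<forall>j\<in>{1..g}. ee n \<beta> j < ee n \<beta> (j-1)" using P by (simp add: puiseux_char_def)
  ultimately have "ee n \<beta> (g - m) < ee n \<beta> (g - m - 1)" by blast
  moreover have "g - m - 1 = g - Suc m" by simp
  ultimately show ?case using Suc by simp
qed

lemma ee_pos: "l \<le> g \<Longrightarrow> ee n \<beta> l \<ge> 1"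
  using ee_ge[of "g - l"] by simp

lemma q_ge2: assumes "1 \<le> l" "l \<le> g" shows "ee n \<beta> (l-1) div ee n \<beta> l \<ge> 2"
proof -
  have lt: "ee n \<beta> l < ee n \<beta> (l-1)" using P assms by (simp add: puiseux_char_def)
  have pos: "ee n \<beta> l \<ge> 1" using ee_pos assms by simp
  have "ee n \<beta> l dvd ee n \<beta> (l-1)" by (rule ee_dvd_mono) simp
  then obtain q where q: "ee n \<beta> (l-1) = ee n \<beta> l * q" by blast
  have "q > 1"
  proof (rule ccontr)
    assume "\<not> q > 1" then have "q \<le> 1" by simp
    then have "ee n \<beta> l * q \<le> ee n \<beta> l * 1" using pos by (intro mult_left_mono) auto
    then show False using lt q by simp
  qed
  then show ?thesis using q pos by simp
qed

lemma beta_lt: "1 \<le> l \<Longrightarrow> l < g \<Longrightarrow> \<beta> l < \<beta> (Suc l)"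
  using P by (simp add: puiseux_char_def)

lemma bb_pos_step: "1 \<le> l \<Longrightarrow> l < g \<Longrightarrow> betabar n \<beta> l > 0 \<Longrightarrow>
   betabar n \<beta> (Suc l) > 2 * betabar n \<beta> l"
proof -
  assume a: "1 \<le> l" "l < g" "betabar n \<beta> l > 0"
  have q: "ee n \<beta> (l-1) div ee n \<beta> l \<ge> 2" using q_ge2 a by simp
  have "(ee n \<beta> (l-1) div ee n \<beta> l) * betabar n \<beta> l \<ge> 2 * betabar n \<beta> l"
    using q a(3) by (intro mult_right_mono) auto
  then show ?thesis unfolding bb_Suc[OF a(1)] using beta_lt[OF a(1,2)] by simp
qed

lemma bb_pos: "1 \<le> l \<Longrightarrow> l \<le> g \<Longrightarrow> betabar n \<beta> l > 0"
proof (induction l rule: nat_induct_at_least)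
  case base then show ?case using P by (simp add: puiseux_char_def)
next
  case (Suc l) then show ?case using bb_pos_step[of l] by simp
qed

lemma bb_step: "1 \<le> l \<Longrightarrow> l < g \<Longrightarrow> betabar n \<beta> (Suc l) > 2 * betabar n \<beta> l"
  using bb_pos_step bb_pos by simp

lemma bb_mono_aux: "1 \<le> a \<Longrightarrow> a + d \<le> g \<Longrightarrow> betabar n \<beta> a \<le> betabar n \<beta> (a + d)"
proof (induction d)
  case 0 then show ?case by simp
next
  case (Suc d)
  then show ?case using bb_step[of "a+d"] bb_pos[of "a+d"] by simp
qed

lemma bb_mono: "1 \<le> a \<Longrightarrow> a \<le> b \<Longrightarrow> b \<le> g \<Longrightarrow> betabar n \<beta> a \<le> betabar n \<beta> b"
  using bb_mono_aux[of a "b - a"] by simp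

lemma bb_gap: assumes "1 \<le> a" "a < b" "b \<le> g" "1 \<le> l" "l < b"
  shows "betabar n \<beta> b - betabar n \<beta> a > betabar n \<beta> l"
proof -
  define m where "m = max a l"
  have "betabar n \<beta> (Suc m) > 2 * betabar n \<beta> m" using bb_step assms m_def by simp
  moreover have "betabar n \<beta> (Suc m) \<le> betabar n \<beta> b" using bb_mono assms m_def by simp
  moreover have "betabar n \<beta> a \<le> betabar n \<beta> m" using bb_mono assms m_def by simp
  moreover have "betabar n \<beta> l \<le> betabar n \<beta> m" using bb_mono assms m_def by simp
  ultimately show ?thesis by simp
qed

end


context
  fixes n :: int and g :: nat and \<beta> :: "nat \<Rightarrow> int"
  assumes P: "puiseux_char n g \<beta>"
begin

lemma n_pos: "n \<ge> 2" using P by (simp add: puiseux_char_def)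

lemma sg_nonneg: "s \<in> semigroup_branch n g \<beta> \<Longrightarrow> s \<ge> 0"
proof -
  assume "s \<in> semigroup_branch n g \<beta>"
  then obtain c where c: "s = int (c 0) * n + (\<Sum>j=1..g. int (c j) * betabar n \<beta> j)"
    by (auto simp: semigroup_branch_def)
  have "(\<Sum>j=1..g. int (c j) * betabar n \<beta> j) \<ge> 0"
    using bb_pos[OF P] by (intro sum_nonneg) (simp add: less_imp_le)
  moreover have "int (c 0) * n \<ge> 0" using n_pos by simp
  ultimately show ?thesis using c by simp
qed

lemma sg_zero: "0 \<in> semigroup_branch n g \<beta>"
  unfolding semigroup_branch_def by (auto intro!: exI[of _ "\<lambda>_. 0"])

lemma sg0: "semigroup_branch n g \<beta> \<union> {0} = semigroup_branch n g \<beta>"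
  using sg_zero by auto

lemma sg_add: "s \<in> semigroup_branch n g \<beta> \<Longrightarrow> t \<in> semigroup_branch n g \<beta> \<Longrightarrow>
   s + t \<in> semigroup_branch n g \<beta>"
proof -
  assume "s \<in> semigroup_branch n g \<beta>" "t \<in> semigroup_branch n g \<beta>"
  then obtain c d where c: "s = int (c 0) * n + (\<Sum>j=1..g. int (c j) * betabar n \<beta> j)"
    and d: "t = int (d 0) * n + (\<Sum>j=1..g. int (d j) * betabar n \<beta> j)"
    by (auto simp: semigroup_branch_def)
  have "s + t = int (c 0 + d 0) * n + (\<Sum>j=1..g. int (c j + d j) * betabar n \<beta> j)"
    unfolding c d by (simp add: sum.distrib algebra_simps)
  then have "\<exists>e. s + t = int (e 0) * n + (\<Sum>j=1..g. int (e j) * betabar n \<beta> j)"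
    by (intro exI[of _ "\<lambda>j. c j + d j"])
  then show ?thesis unfolding semigroup_branch_def by simp
qed

lemma sg_small: assumes "s \<in> semigroup_branch n g \<beta>" "1 \<le> l" "l \<le> g" "s < betabar n \<beta> l"
  shows "ee n \<beta> (l - 1) dvd s"
proof -
  obtain c where c: "s = int (c 0) * n + (\<Sum>j=1..g. int (c j) * betabar n \<beta> j)"
    using assms(1) by (auto simp: semigroup_branch_def)
  have nn: "\<And>j. j \<in> {1..g} \<Longrightarrow> int (c j) * betabar n \<beta> j \<ge> 0"
    using bb_pos[OF P] by (simp add: less_imp_le)
  have "ee n \<beta> (l-1) dvd int (c j) * betabar n \<beta> j" if j: "j \<in> {1..g}" for j
  proof (cases "j < l")
    case True
    have "ee n \<beta> (l-1) dvd ee n \<beta> j" using True by (intro ee_dvd_mono) simp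
    moreover have "ee n \<beta> j dvd betabar n \<beta> j" using ee_dvd_bb[of j n \<beta>] j by simp
    ultimately show ?thesis by (intro dvd_mult) (rule dvd_trans)
  next
    case False
    have "c j = 0"
    proof (rule ccontr)
      assume "c j \<noteq> 0"
      then have "int (c j) * betabar n \<beta> j \<ge> betabar n \<beta> j"
        using bb_pos[OF P, of j] j by (simp add: mult_le_cancel_right1)
      moreover have "betabar n \<beta> j \<ge> betabar n \<beta> l" using bb_mono[OF P, of l j] False j assms by simp
      moreover have "int (c j) * betabar n \<beta> j \<le> (\<Sum>j=1..g. int (c j) * betabar n \<beta> j)"
        using member_le_sum[of j "{1..g}" "\<lambda>j. int (c j) * betabar n \<beta> j"] nn j by simp
      moreover have "int (c 0) * n \<ge> 0" using n_pos by simp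
      ultimately show False using c assms(4) by simp
    qed
    then show ?thesis by simp
  qed
  then have "ee n \<beta> (l-1) dvd (\<Sum>j=1..g. int (c j) * betabar n \<beta> j)" by (intro dvd_sum) auto
  moreover have "ee n \<beta> (l-1) dvd n" using ee_dvd_mono[of 0 "l-1" n \<beta>] by simp
  ultimately show ?thesis using c by simp
qed

end

lemma step_cong: assumes "1 \<le> l" "x mod ee n \<beta> (l-1) = \<beta> l mod ee n \<beta> (l-1)"
  shows "(x + betabar n \<beta> (Suc l) - betabar n \<beta> l) mod ee n \<beta> l = \<beta> (Suc l) mod ee n \<beta> l"
proof -
  define q where "q = ee n \<beta> (l-1) div ee n \<beta> l"
  have "ee n \<beta> (l-1) dvd x - \<beta> l" using assms(2) by (simp add: mod_eq_dvd_iff)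
  moreover have "ee n \<beta> l dvd ee n \<beta> (l-1)" by (rule ee_dvd_mono) simp
  ultimately have d1: "ee n \<beta> l dvd x - \<beta> l" by (rule dvd_trans[rotated])
  have d2: "ee n \<beta> l dvd betabar n \<beta> l" using ee_dvd_bb assms(1) by blast
  have eq: "x + betabar n \<beta> (Suc l) - betabar n \<beta> l - \<beta> (Suc l) = (x - \<beta> l) + (q - 1) * betabar n \<beta> l"
    unfolding bb_Suc[OF assms(1)] q_def by (simp add: algebra_simps)
  have "ee n \<beta> l dvd x + betabar n \<beta> (Suc l) - betabar n \<beta> l - \<beta> (Suc l)"
    unfolding eq using d1 d2 by (intro dvd_add dvd_mult) auto
  then show ?thesis by (simp add: mod_eq_dvd_iff)
qed

lemma chain_aux: assumes "1 \<le> a" "k \<le> betabar n \<beta> a" "k mod ee n \<beta> (a-1) = \<beta> a mod ee n \<beta> (a-1)"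
  shows "k + betabar n \<beta> (Suc (a + d)) - betabar n \<beta> a \<le> betabar n \<beta> (Suc (a+d)) \<and>
    (k + betabar n \<beta> (Suc (a + d)) - betabar n \<beta> a) mod ee n \<beta> (a + d) = \<beta> (Suc (a+d)) mod ee n \<beta> (a+d)"
proof (induction d)
  case 0 then show ?case using assms step_cong[of a k n \<beta>] by simp
next
  case (Suc d)
  define y where "y = k + betabar n \<beta> (Suc (a + d)) - betabar n \<beta> a"
  have y: "y \<le> betabar n \<beta> (Suc (a+d))" "y mod ee n \<beta> (Suc (a+d) - 1) = \<beta> (Suc (a+d)) mod ee n \<beta> (Suc (a+d) - 1)"
    using Suc y_def by auto
  have "(y + betabar n \<beta> (Suc (Suc (a+d))) - betabar n \<beta> (Suc (a+d))) mod ee n \<beta> (Suc (a+d))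
      = \<beta> (Suc (Suc (a+d))) mod ee n \<beta> (Suc (a+d))"
    by (rule step_cong) (use y in auto)
  moreover have "y + betabar n \<beta> (Suc (Suc (a+d))) - betabar n \<beta> (Suc (a+d))
     = k + betabar n \<beta> (Suc (a + Suc d)) - betabar n \<beta> a" unfolding y_def by (simp del: betabar.simps ee.simps)
  ultimately show ?case using y(1) assms(2) by (simp del: betabar.simps ee.simps)
qed

lemma chain: assumes "1 \<le> a" "a < b" "k \<le> betabar n \<beta> a" "k mod ee n \<beta> (a-1) = \<beta> a mod ee n \<beta> (a-1)"
  shows "k + betabar n \<beta> b - betabar n \<beta> a \<le> betabar n \<beta> b \<and>
    (k + betabar n \<beta> b - betabar n \<beta> a) mod ee n \<beta> (b - 1) = \<beta> b mod ee n \<beta> (b - 1)"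
  using chain_aux[OF assms(1,3,4), of "b - a - 1"] assms(2) by simp

lemma T_chain_aux: assumes T: "Cw_collection n g \<beta> T" and "k \<in> T" "1 \<le> a" "k \<le> betabar n \<beta> a"
   "k mod ee n \<beta> (a-1) = \<beta> a mod ee n \<beta> (a-1)"
 shows "Suc (a + d) \<le> g \<Longrightarrow> k + betabar n \<beta> (Suc (a + d)) - betabar n \<beta> a \<in> T"
proof (induction d)
  case 0
  then show ?case using T assms unfolding Cw_collection_def by auto
next
  case (Suc d)
  define y where "y = k + betabar n \<beta> (Suc (a + d)) - betabar n \<beta> a"
  have yT: "y \<in> T" using Suc y_def by simp
  have y: "y \<le> betabar n \<beta> (Suc (a+d))" "y mod ee n \<beta> (Suc (a+d) - 1) = \<beta> (Suc (a+d)) mod ee n \<beta> (Suc (a+d) - 1)"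
    using chain[OF assms(3) _ assms(4,5), of "Suc (a+d)"] y_def by auto
  have "Suc (a+d) \<in> {1..<g}" using Suc.prems by simp
  then have "y + betabar n \<beta> (Suc (Suc (a+d))) - betabar n \<beta> (Suc (a+d)) \<in> T"
    using T yT y unfolding Cw_collection_def by blast
  moreover have "y + betabar n \<beta> (Suc (Suc (a+d))) - betabar n \<beta> (Suc (a+d))
     = k + betabar n \<beta> (Suc (a + Suc d)) - betabar n \<beta> a" unfolding y_def by (simp del: betabar.simps ee.simps)
  ultimately show ?case by (simp del: betabar.simps ee.simps)
qed

lemma T_chain: assumes T: "Cw_collection n g \<beta> T" and "k \<in> T" "1 \<le> a" "a < b" "b \<le> g" "k \<le> betabar n \<beta> a"
   "k mod ee n \<beta> (a-1) = \<beta> a mod ee n \<beta> (a-1)"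
 shows "k + betabar n \<beta> b - betabar n \<beta> a \<in> T"
  using T_chain_aux[OF T assms(2,3,6,7), of "b - a - 1"] assms(4,5) by simp



theorem mainTheorem7:
  fixes n :: int and g :: nat and \<beta> :: "nat \<Rightarrow> int" and S :: "int set"
  assumes "puiseux_char n g \<beta>"
    and "S \<subseteq> {0<..}"
  shows "Cw_hull n g \<beta> S =
    {k + s | k s. k \<in> S \<and> s \<in> semigroup_branch n g \<beta> \<union> {0}}
    \<union> {k + betabar n \<beta> b - betabar n \<beta> a + s | k s a b.
         k \<in> S \<and> s \<in> semigroup_branch n g \<beta> \<union> {0} \<and> 1 \<le> a \<and> a < b \<and> b \<le> g
         \<and> k \<le> betabar n \<beta> a \<and> k mod ee n \<beta> (a - 1) = \<beta> a mod ee n \<beta> (a - 1)}"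
  (is "_ = ?A \<union> ?B")
proof -
  note P = assms(1)
  let ?SG = "semigroup_branch n g \<beta>"
  let ?e = "ee n \<beta>" and ?b = "betabar n \<beta>"
  have sg0: "?SG \<union> {0} = ?SG" by (rule sg0[OF P])
  have Spos: "\<And>k. k \<in> S \<Longrightarrow> k > 0" using assms(2) by auto
  have subT: "?A \<union> ?B \<subseteq> T" if T: "Cw_collection n g \<beta> T" and ST: "S \<subseteq> T" for T
  proof
    fix x assume "x \<in> ?A \<union> ?B"
    then show "x \<in> T"
    proof
      assume "x \<in> ?A"
      then obtain k s where "x = k + s" "k \<in> S" "s \<in> ?SG" using sg_zero[OF P] by blast
      then show ?thesis using T ST unfolding Cw_collection_def by auto
    next
      assume "x \<in> ?B"
      then obtain k s a b where x: "x = k + ?b b - ?b a + s" "k \<in> S" "s \<in> ?SG" "1 \<le> a" "a < b" "b \<le> g"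
        "k \<le> ?b a" "k mod ?e (a - 1) = \<beta> a mod ?e (a - 1)" using sg_zero[OF P] by blast
      have "k + ?b b - ?b a \<in> T" using T_chain[OF T _ x(4,5,6,7,8)] x(2) ST by auto
      then show ?thesis using T x(1,3) unfolding Cw_collection_def by auto
    qed
  qed
  have Bpos: "?b b - ?b a > 0" if "1 \<le> a" "a < b" "b \<le> g" for a b
    using bb_gap[OF P that(1,2,3) that(1,2)] bb_pos[OF P, of a] that by simp
  have CwR: "Cw_collection n g \<beta> (?A \<union> ?B)"
    unfolding Cw_collection_def
  proof (intro conjI ballI impI)
    show "?A \<union> ?B \<subseteq> {0<..}"
    proof
      fix x assume "x \<in> ?A \<union> ?B"
      then show "x \<in> {0<..}"
      proof
        assume "x \<in> ?A"
        then obtain k s where "x = k + s" "k \<in> S" "s \<in> ?SG" using sg_zero[OF P] by blast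
        then show ?thesis using Spos sg_nonneg[OF P] by force
      next
        assume "x \<in> ?B"
        then obtain k s a b where x: "x = k + ?b b - ?b a + s" "k \<in> S" "s \<in> ?SG" "1 \<le> a" "a < b" "b \<le> g"
          using sg_zero[OF P] by blast
        then show ?thesis using Spos[OF x(2)] sg_nonneg[OF P x(3)] Bpos[OF x(4,5,6)] by simp
      qed
    qed
  next
    fix x t assume xR: "x \<in> ?A \<union> ?B" and t: "t \<in> ?SG"
    from xR show "x + t \<in> ?A \<union> ?B"
    proof
      assume "x \<in> ?A"
      then obtain k s where x: "x = k + s" "k \<in> S" "s \<in> ?SG" using sg_zero[OF P] by blast
      have "x + t = k + (s + t)" using x by simp
      moreover have "s + t \<in> ?SG" using sg_add[OF P x(3) t] .
      ultimately show ?thesis using x(2) sg0 by blast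
    next
      assume "x \<in> ?B"
      then obtain k s a b where x: "x = k + ?b b - ?b a + s" "k \<in> S" "s \<in> ?SG" "1 \<le> a" "a < b" "b \<le> g"
        "k \<le> ?b a" "k mod ?e (a - 1) = \<beta> a mod ?e (a - 1)" using sg_zero[OF P] by blast
      have "x + t = k + ?b b - ?b a + (s + t)" using x by simp
      moreover have "s + t \<in> ?SG" using sg_add[OF P x(3) t] .
      ultimately have "\<exists>k s a b. x + t = k + ?b b - ?b a + s \<and>
         k \<in> S \<and> s \<in> ?SG \<union> {0} \<and> 1 \<le> a \<and> a < b \<and> b \<le> g
         \<and> k \<le> ?b a \<and> k mod ?e (a - 1) = \<beta> a mod ?e (a - 1)" using x by blast
      then show ?thesis by blast
    qed
  next
    fix l x assume l: "l \<in> {1..<g}" and xR: "x \<in> ?A \<union> ?B"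
      and xc: "x \<le> ?b l \<and> x mod ?e (l - 1) = \<beta> l mod ?e (l - 1)"
    have l1: "1 \<le> l" "l < g" using l by auto
    from xR show "x + ?b (Suc l) - ?b l \<in> ?A \<union> ?B"
    proof
      assume "x \<in> ?A"
      then obtain k s where x: "x = k + s" "k \<in> S" "s \<in> ?SG" using sg_zero[OF P] by blast
      have "s < ?b l" using xc x Spos[OF x(2)] by simp
      then have "?e (l - 1) dvd s" using sg_small[OF P x(3) l1(1)] l1 by simp
      moreover have "?e (l-1) dvd (k + s) - \<beta> l" using xc x(1) by (simp add: mod_eq_dvd_iff)
      ultimately have "?e (l-1) dvd k - \<beta> l"
        using dvd_diff[of "?e (l-1)" "(k + s) - \<beta> l" s] by (simp add: algebra_simps)
      then have kc: "k mod ?e (l-1) = \<beta> l mod ?e (l-1)" by (simp add: mod_eq_dvd_iff)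
      have kl: "k \<le> ?b l" using xc x sg_nonneg[OF P x(3)] by simp
      have "x + ?b (Suc l) - ?b l = k + ?b (Suc l) - ?b l + s" using x by simp
      then have "\<exists>k s a b. x + ?b (Suc l) - ?b l = k + ?b b - ?b a + s \<and>
         k \<in> S \<and> s \<in> ?SG \<union> {0} \<and> 1 \<le> a \<and> a < b \<and> b \<le> g
         \<and> k \<le> ?b a \<and> k mod ?e (a - 1) = \<beta> a mod ?e (a - 1)"
        using x kc kl l1 by (intro exI[of _ k] exI[of _ s] exI[of _ l] exI[of _ "Suc l"]) auto
      then show ?thesis by blast
    next
      assume "x \<in> ?B"
      then obtain k s a b where x: "x = k + ?b b - ?b a + s" "k \<in> S" "s \<in> ?SG" "1 \<le> a" "a < b" "b \<le> g"
        "k \<le> ?b a" "k mod ?e (a - 1) = \<beta> a mod ?e (a - 1)" using sg_zero[OF P] by blast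
      consider "l < b" | "l = b" | "b < l" by linarith
      then show ?thesis
      proof cases
        case 1
        have "?b b - ?b a > ?b l" using bb_gap[OF P x(4,5,6) l1(1) 1] .
        then have False using xc x Spos[OF x(2)] sg_nonneg[OF P x(3)] by simp
        then show ?thesis ..
      next
        case 2
        have "x + ?b (Suc l) - ?b l = k + ?b (Suc b) - ?b a + s" using x 2 by simp
        then have "\<exists>k s a b. x + ?b (Suc l) - ?b l = k + ?b b - ?b a + s \<and>
           k \<in> S \<and> s \<in> ?SG \<union> {0} \<and> 1 \<le> a \<and> a < b \<and> b \<le> g
           \<and> k \<le> ?b a \<and> k mod ?e (a - 1) = \<beta> a mod ?e (a - 1)"
          using x 2 l1 by (intro exI[of _ k] exI[of _ s] exI[of _ a] exI[of _ "Suc b"]) auto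
        then show ?thesis by blast
      next
        case 3
        define y where "y = k + ?b b - ?b a"
        have ych: "y mod ?e (b - 1) = \<beta> b mod ?e (b - 1)"
          using chain[OF x(4,5,7,8)] y_def by simp
        have ypos: "y > 0" using y_def Spos[OF x(2)] Bpos[OF x(4,5,6)] by simp
        have "s < ?b l" using xc x ypos y_def by simp
        then have ds: "?e (l - 1) dvd s" using sg_small[OF P x(3) l1(1)] l1 by simp
        have "?e (l-1) dvd (y + s) - \<beta> l" using xc x(1) y_def by (simp add: mod_eq_dvd_iff)
        then have "?e (l-1) dvd ((y + s) - \<beta> l) - s" using ds by (rule dvd_diff)
        then have d1: "?e (l-1) dvd y - \<beta> l" by (simp add: algebra_simps)
        have "?e (l-1) dvd ?e (b-1)" using 3 by (intro ee_dvd_mono) simp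
        moreover have "?e (b-1) dvd y - \<beta> b" using ych by (simp add: mod_eq_dvd_iff)
        ultimately have d2: "?e (l-1) dvd y - \<beta> b" by (rule dvd_trans)
        have "?e (l-1) dvd ?e b" using 3 by (intro ee_dvd_mono) simp
        moreover have "?e b dvd \<beta> b" using ee_dvd_beta[of b n \<beta>] x(4,5) by simp
        ultimately have d3: "?e (l-1) dvd \<beta> b" by (rule dvd_trans)
        have "?e (l-1) dvd (y - \<beta> b) - (y - \<beta> l) + \<beta> b"
          by (rule dvd_add[OF dvd_diff[OF d2 d1] d3])
        then have dl: "?e (l-1) dvd \<beta> l" by simp
        have epos: "?e (l-1) \<ge> 1" using ee_pos[OF P, of "l-1"] l1 by simp
        have "?e l = gcd (?e (l-1)) (\<beta> l)"
          using l1 by (cases l) auto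
        also have "\<dots> = ?e (l-1)" using gcd_proj1_if_dvd[OF dl] epos by simp
        finally have "?e l = ?e (l-1)" .
        moreover have "?e l < ?e (l-1)" using P l1 by (simp add: puiseux_char_def)
        ultimately show ?thesis by simp
      qed
    qed
  qed
  have SR: "S \<subseteq> ?A \<union> ?B"
  proof
    fix k assume "k \<in> S"
    then have "k = k + 0 \<and> k \<in> S \<and> (0::int) \<in> ?SG \<union> {0}" by simp
    then show "k \<in> ?A \<union> ?B" by blast
  qed
  show ?thesis
  proof
    show "Cw_hull n g \<beta> S \<subseteq> ?A \<union> ?B"
      unfolding Cw_hull_def using CwR SR by (intro Inter_lower) simp
    show "?A \<union> ?B \<subseteq> Cw_hull n g \<beta> S"
      unfolding Cw_hull_def using subT by blast
  qed
qed

end
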